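(* Let $\mathbb{K}$ be a field of characteristic $2$, let $(A,\cdot,\{-,-\},(-)^{\{2\}})$ be a weakly restricted Poisson algebra, and let $\mathcal{B}$ be a linear basis of $A$. Then $A$ is a restricted Poisson algebra if and only if $(xy)^{\{2\}}=x^2y^{\{2\}}+y^2x^{\{2\}}+xy\{x,y\}$ holds for every pair $x,y\in\mathcal{B}$.
   Context: $\mathbb{K}$ has characteristic $2$. A Poisson algebra is a commutative associative (not necessarily unital) $\mathbb{K}$-algebra $(A,\cdot)$ with a Lie bracket satisfying $\{ab,c\}=a\{b,c\}+b\{a,c\}$. It is weakly restricted if there is a map $(-)^{\{2\}}:A\to A$ making $(A,\{,\},(-)^{\{2\}})$ a restricted Lie algebra, i.e. $(\lambda x)^{\{2\}}=\lambda^2x^{\{2\}}$, $\mathrm{ad}_{x^{\{2\}}}=\mathrm{ad}_x^2$, $(x+y)^{\{2\}}=x^{\{2\}}+y^{\{2\}}+\{x,y\}$. It is restricted if moreover $(xy)^{\{2\}}=x^2y^{\{2\}}+y^2x^{\{2\}}+xy\{x,y\}$ for all $x,y\in A$. *)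

theory Defs
  imports Main "HOL.Vector_Spaces"
begin

text \<open>A is modelled as a type 'a of class comm_ring (commutative, associative,
  not necessarily unital ring), which is a vector space over the field 'k via
  the scalar multiplication scale, with multiplication compatible with scalars.\<close>

definition comm_algebra :: "('k::field \<Rightarrow> 'a::comm_ring \<Rightarrow> 'a) \<Rightarrow> bool" where
  "comm_algebra scale \<longleftrightarrow>
     vector_space scale \<and>
     (\<forall>c x y. scale c (x * y) = scale c x * y)"

definition lie_algebra :: "('k::field \<Rightarrow> 'a::ab_group_add \<Rightarrow> 'a) \<Rightarrow> ('a \<Rightarrow> 'a \<Rightarrow> 'a) \<Rightarrow> bool" where
  "lie_algebra scale br \<longleftrightarrow>
     vector_space scale \<and>
     (\<forall>x y z. br (x + y) z = br x z + br y z) \<and>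
     (\<forall>x y z. br x (y + z) = br x y + br x z) \<and>
     (\<forall>c x y. br (scale c x) y = scale c (br x y)) \<and>
     (\<forall>c x y. br x (scale c y) = scale c (br x y)) \<and>
     (\<forall>x. br x x = 0) \<and>
     (\<forall>x y z. br x (br y z) + br y (br z x) + br z (br x y) = 0)"

definition poisson_algebra :: "('k::field \<Rightarrow> 'a::comm_ring \<Rightarrow> 'a) \<Rightarrow> ('a \<Rightarrow> 'a \<Rightarrow> 'a) \<Rightarrow> bool" where
  "poisson_algebra scale br \<longleftrightarrow>
     comm_algebra scale \<and> lie_algebra scale br \<and>
     (\<forall>a b c. br (a * b) c = a * br b c + b * br a c)"

text \<open>Restricted Lie algebra in characteristic 2 (ad x = br x).\<close>
definition restricted_lie :: "('k::field \<Rightarrow> 'a::ab_group_add \<Rightarrow> 'a) \<Rightarrow> ('a \<Rightarrow> 'a \<Rightarrow> 'a) \<Rightarrow> ('a \<Rightarrow> 'a) \<Rightarrow> bool" where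
  "restricted_lie scale br sq \<longleftrightarrow>
     lie_algebra scale br \<and>
     (\<forall>c x. sq (scale c x) = scale (c ^ 2) (sq x)) \<and>
     (\<forall>x. br (sq x) = br x \<circ> br x) \<and>
     (\<forall>x y. sq (x + y) = sq x + sq y + br x y)"

definition weakly_restricted_poisson ::
  "('k::field \<Rightarrow> 'a::comm_ring \<Rightarrow> 'a) \<Rightarrow> ('a \<Rightarrow> 'a \<Rightarrow> 'a) \<Rightarrow> ('a \<Rightarrow> 'a) \<Rightarrow> bool" where
  "weakly_restricted_poisson scale br sq \<longleftrightarrow>
     poisson_algebra scale br \<and> restricted_lie scale br sq"

definition restricted_poisson ::
  "('k::field \<Rightarrow> 'a::comm_ring \<Rightarrow> 'a) \<Rightarrow> ('a \<Rightarrow> 'a \<Rightarrow> 'a) \<Rightarrow> ('a \<Rightarrow> 'a) \<Rightarrow> bool" where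
  "restricted_poisson scale br sq \<longleftrightarrow>
     weakly_restricted_poisson scale br sq \<and>
     (\<forall>x y. sq (x * y) = (x * x) * sq y + (y * y) * sq x + x * y * br x y)"

end

theory Submission
  imports Defs
begin

theorem mainTheorem9:
  fixes scale :: "'k::field \<Rightarrow> 'a::comm_ring \<Rightarrow> 'a"
    and br :: "'a \<Rightarrow> 'a \<Rightarrow> 'a" and sq :: "'a \<Rightarrow> 'a" and B :: "'a set"
  assumes "CHAR('k) = 2"
    and "weakly_restricted_poisson scale br sq"
    and "\<not> module.dependent scale B"
    and "module.span scale B = UNIV"
  shows "restricted_poisson scale br sq \<longleftrightarrow>
    (\<forall>x\<in>B. \<forall>y\<in>B. sq (x * y) = (x * x) * sq y + (y * y) * sq x + x * y * br x y)"
proof -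
  note W = assms(2)[unfolded weakly_restricted_poisson_def poisson_algebra_def comm_algebra_def
      lie_algebra_def restricted_lie_def]
  have vs: "vector_space scale" using W by (elim conjE) assumption

  have calg: "\<forall>c x y. scale c (x * y) = scale c x * y" using W by (elim conjE) assumption
  note calg = calg[rule_format]
  have bradd1: "\<forall>x y z. br (x + y) z = br x z + br y z" using W by (elim conjE) assumption
  note bradd1 = bradd1[rule_format]
  have bradd2: "\<forall>x y z. br x (y + z) = br x y + br x z" using W by (elim conjE) assumption
  note bradd2 = bradd2[rule_format]
  have brsc1: "\<forall>c x y. br (scale c x) y = scale c (br x y)" using W by (elim conjE) assumption
  note brsc1 = brsc1[rule_format]
  have brsc2: "\<forall>c x y. br x (scale c y) = scale c (br x y)" using W by (elim conjE) assumption
  note brsc2 = brsc2[rule_format]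
  have bralt: "\<forall>x. br x x = 0" using W by (elim conjE) assumption
  note bralt = bralt[rule_format]
  have leib: "\<forall>a b c. br (a * b) c = a * br b c + b * br a c" using W by (elim conjE) assumption
  note leib = leib[rule_format]
  have sqsc: "\<forall>c x. sq (scale c x) = scale (c ^ 2) (sq x)" using W by (elim conjE) assumption
  note sqsc = sqsc[rule_format]
  have sqadd: "\<forall>x y. sq (x + y) = sq x + sq y + br x y" using W by (elim conjE) assumption
  note sqadd = sqadd[rule_format]
  interpret vector_space scale by (rule vs)
  have k2: "(1 + 1 :: 'k) = 0"
    using assms(1) of_nat_CHAR[where 'a='k] by simp
  have two: "\<And>a::'a. a + a = 0"
  proof -
    fix a :: 'a
    have "scale (1 + 1) a = scale 1 a + scale 1 a" by (rule scale_left_distrib)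
    then have "a + a = scale (1 + 1) a" by simp
    then show "a + a = 0" using k2 by simp
  qed
  have neg: "\<And>a::'a. - a = a" using two by (metis add_eq_0_iff2)
  have brsym: "\<And>x y. br x y = br y x"
  proof -
    fix x y
    have "0 = br (x + y) (x + y)" using bralt by simp
    also have "\<dots> = br x x + br x y + (br y x + br y y)" by (simp add: bradd1 bradd2 add.assoc)
    also have "\<dots> = br x y + br y x" by (simp add: bralt)
    finally show "br x y = br y x" using neg by (metis add_eq_0_iff2)
  qed
  define F where "F x y = sq (x * y) + (x * x) * sq y + (y * y) * sq x + x * y * br x y" for x y
  have Feq: "F x y = 0 \<longleftrightarrow> sq (x * y) = (x * x) * sq y + (y * y) * sq x + x * y * br x y" for x y
  proof -
    have "\<And>a b::'a. a + b = 0 \<longleftrightarrow> a = b" using neg by (metis add_eq_0_iff2)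
    moreover have "F x y = sq (x * y) + ((x * x) * sq y + (y * y) * sq x + x * y * br x y)"
      unfolding F_def by (simp only: add.assoc)
    ultimately show ?thesis by simp
  qed
  have Fsym: "F x y = F y x" for x y
    unfolding F_def by (simp add: brsym[of x y] mult.commute[of x y] add.commute add.left_commute)
  have sqmul: "scale c x * scale c y = scale (c ^ 2) (x * y)" for c x y
    by (metis calg mult.commute scale_scale power2_eq_square)
  have Fsc: "F (scale c x) y = scale (c ^ 2) (F x y)" for c x y
  proof -
    have c1: "\<And>c a b. scale c a * b = scale c (a * b)" using calg by simp
    have c2: "\<And>c a b. a * scale c b = scale c (a * b)" using calg by (metis mult.commute)
    show ?thesis unfolding F_def
      by (simp add: c1 c2 sqsc brsc1 scale_right_distrib power2_eq_square mult.assoc)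
  qed
  have Fadd: "F (x1 + x2) y = F x1 y + F x2 y" for x1 x2 y
  proof -
    have b: "br (x1 * y) (x2 * y) = x1 * y * br x2 y + x2 * y * br x1 y + y * y * br x1 x2"
    proof -
      have e1: "br y (x2 * y) = y * br x2 y"
      proof -
        have "br y (x2 * y) = br (x2 * y) y" by (rule brsym)
        also have "\<dots> = x2 * br y y + y * br x2 y" by (rule leib)
        finally show ?thesis by (simp add: bralt)
      qed
      have e2: "br x1 (x2 * y) = x2 * br x1 y + y * br x1 x2"
      proof -
        have "br x1 (x2 * y) = br (x2 * y) x1" by (rule brsym)
        also have "\<dots> = x2 * br y x1 + y * br x2 x1" by (rule leib)
        also have "br y x1 = br x1 y" by (rule brsym)
        also have "br x2 x1 = br x1 x2" by (rule brsym)
        finally show ?thesis .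
      qed
      show ?thesis using leib[of x1 y "x2 * y"] e1 e2
        by (simp add: distrib_left ac_simps)
    qed
    have two': "\<And>a b::'a. a + (a + b) = b" using two by (metis add.assoc add_0)
    show ?thesis unfolding F_def
      by (simp add: distrib_left distrib_right sqadd b bradd1 ac_simps two two')
  qed
  have F0: "F 0 y = 0" for y
    using Fadd[of 0 0 y] two[of "F 0 y"] by simp
  have Fstep: "F (scale c x + z) y = 0" if "F x y = 0" "F z y = 0" for c x z y
    using that by (simp add: Fadd Fsc)
  show ?thesis
  proof
    assume "restricted_poisson scale br sq"
    then show "\<forall>x\<in>B. \<forall>y\<in>B. sq (x * y) = (x * x) * sq y + (y * y) * sq x + x * y * br x y"
      unfolding restricted_poisson_def by blast
  next
    assume H: "\<forall>x\<in>B. \<forall>y\<in>B. sq (x * y) = (x * x) * sq y + (y * y) * sq x + x * y * br x y"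
    have HB: "\<forall>y\<in>B. F x y = 0" if "x \<in> span B" for x
      using that
    proof (induction rule: span_induct_alt)
      case base
      then show ?case using F0 by simp
    next
      case (step c x z)
      then show ?case using H Feq Fstep by blast
    qed
    have HA: "F x y = 0" for x y
    proof -
      have "y \<in> span B" using assms(4) by simp
      then have "F y x = 0"
      proof (induction rule: span_induct_alt)
        case base
        then show ?case using F0 by simp
      next
        case (step c b z)
        have "F x b = 0" using HB[of x] step(1) assms(4) by simp
        then have "F b x = 0" using Fsym[of x b] by simp
        then show ?case using step(2) Fstep by blast
      qed
      then show ?thesis using Fsym by simp
    qed
    show "restricted_poisson scale br sq"
      unfolding restricted_poisson_def using assms(2) HA Feq by blast
  qed
qed

end
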